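(* Let $(X,A)$, $(Y,B)$, $(U,D)$ be worlds of the canonical model for $\mathbb{PCL}$. If $S_X(Y,B)\in\mathcal{N}(X,A)$ and $(U,D)\in S_X(Y,B)$, then $S_X(U,D)\subseteq S_X(Y,B)$.
   Context: Formulas $\mathcal{L}::=p\mid\bot\mid A\wedge B\mid A\lor B\mid A\to B\mid A>B$; maximal consistent sets relative to the axiom system of $\mathbb{PCL}$ (classical propositional logic, rules (RCEA) from $A\leftrightarrow B$ infer $(A>C)\leftrightarrow(B>C)$, (RCK) from $A\to B$ infer $(C>A)\to(C>B)$, axioms (ID) $A>A$, (R-And) $(A>B)\wedge(A>C)\to(A>(B\wedge C))$, (CM) $(A>B)\wedge(A>C)\to((A\wedge B)>C)$, (OR) $(A>C)\wedge(B>C)\to((A\lor B)>C)$). For maximal consistent $X$: $X^B=\{C\mid B>C\in X\}$, $A\le_X B$ iff $(A\lor B)>A\in X$. Canonical worlds: $\mathcal{W}=\{(X,A)\mid X$ maximal consistent, $A\in X\}$. For $(X,A),(Y,B)\in\mathcal{W}$: $S_X(Y,B)=\{(Z,C)\in\mathcal{W}\mid X^C\subseteq Z,\ C\le_X B,\ B\notin Z\}\cup\{(Y,B)\}$, and $\mathcal{N}(X,A)=\{S_X(Y,B)\mid(Y,B)\in\mathcal{W},\ X^B\subseteq Y\}$. *)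

theory Defs
  imports Main
begin

datatype 'p form =
    Atom 'p
  | Bot
  | Conj "'p form" "'p form"
  | Disj "'p form" "'p form"
  | Imp "'p form" "'p form"
  | Cond "'p form" "'p form"

definition Iff :: "'p form \<Rightarrow> 'p form \<Rightarrow> 'p form" where
  "Iff A B = Conj (Imp A B) (Imp B A)"

definition Top :: "'p form" where
  "Top = Imp Bot Bot"

text \<open>Classical propositional evaluation, treating atoms and conditionals
  as propositional letters.\<close>
fun peval :: "('p form \<Rightarrow> bool) \<Rightarrow> 'p form \<Rightarrow> bool" where
  "peval v (Atom p) = v (Atom p)"
| "peval v Bot = False"
| "peval v (Conj A B) = (peval v A \<and> peval v B)"
| "peval v (Disj A B) = (peval v A \<or> peval v B)"
| "peval v (Imp A B) = (peval v A \<longrightarrow> peval v B)"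
| "peval v (Cond A B) = v (Cond A B)"

definition taut :: "'p form \<Rightarrow> bool" where
  "taut A = (\<forall>v. peval v A)"

inductive pcl :: "'p form \<Rightarrow> bool" where
  Taut: "taut A \<Longrightarrow> pcl A"
| MP: "pcl (Imp A B) \<Longrightarrow> pcl A \<Longrightarrow> pcl B"
| RCEA: "pcl (Iff A B) \<Longrightarrow> pcl (Iff (Cond A C) (Cond B C))"
| RCK: "pcl (Imp A B) \<Longrightarrow> pcl (Imp (Cond C A) (Cond C B))"
| ID: "pcl (Cond A A)"
| RAnd: "pcl (Imp (Conj (Cond A B) (Cond A C)) (Cond A (Conj B C)))"
| CM: "pcl (Imp (Conj (Cond A B) (Cond A C)) (Cond (Conj A B) C))"
| OR: "pcl (Imp (Conj (Cond A C) (Cond B C)) (Cond (Disj A B) C))"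

definition conjs :: "'p form list \<Rightarrow> 'p form" where
  "conjs L = foldr Conj L Top"

definition consistent :: "'p form set \<Rightarrow> bool" where
  "consistent X = (\<not> (\<exists>L. set L \<subseteq> X \<and> pcl (Imp (conjs L) Bot)))"

definition maxcons :: "'p form set \<Rightarrow> bool" where
  "maxcons X = (consistent X \<and> (\<forall>A. A \<notin> X \<longrightarrow> \<not> consistent (insert A X)))"

definition condset :: "'p form set \<Rightarrow> 'p form \<Rightarrow> 'p form set" where
  "condset X B = {C. Cond B C \<in> X}"

definition leX :: "'p form set \<Rightarrow> 'p form \<Rightarrow> 'p form \<Rightarrow> bool" where
  "leX X A B = (Cond (Disj A B) A \<in> X)"

definition worlds :: "('p form set \<times> 'p form) set" where
  "worlds = {(X, A). maxcons X \<and> A \<in> X}"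

definition SX :: "'p form set \<Rightarrow> ('p form set \<times> 'p form) \<Rightarrow> ('p form set \<times> 'p form) set" where
  "SX X w = (case w of (Y, B) \<Rightarrow>
     {(Z, C) \<in> worlds. condset X C \<subseteq> Z \<and> leX X C B \<and> B \<notin> Z} \<union> {(Y, B)})"

definition NX :: "('p form set \<times> 'p form) \<Rightarrow> ('p form set \<times> 'p form) set set" where
  "NX w = (case w of (X, A) \<Rightarrow>
     {SX X (Y, B) | Y B. (Y, B) \<in> worlds \<and> condset X B \<subseteq> Y})"

end

theory Submission
  imports Defs
begin

lemma peval_conjs: "peval v (conjs L) = (\<forall>x\<in>set L. peval v x)"
  by (induct L) (auto simp: conjs_def Top_def)

lemma derive_mem:
  assumes "maxcons X" "set Ps \<subseteq> X" "pcl (Imp (conjs Ps) Q)"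
  shows "Q \<in> X"
proof (rule ccontr)
  assume "Q \<notin> X"
  with assms(1) have "\<not> consistent (insert Q X)" by (auto simp: maxcons_def)
  then obtain L where L: "set L \<subseteq> insert Q X" "pcl (Imp (conjs L) Bot)"
    by (auto simp: consistent_def)
  define L' where "L' = Ps @ filter (\<lambda>x. x \<noteq> Q) L"
  have sub: "set L' \<subseteq> X" using L assms by (auto simp: L'_def)
  have t: "taut (Imp (Imp (conjs Ps) Q) (Imp (Imp (conjs L) Bot) (Imp (conjs L') Bot)))"
    unfolding taut_def by (auto simp: peval_conjs L'_def)
  have "pcl (Imp (conjs L') Bot)" using MP[OF MP[OF Taut[OF t] assms(3)] L(2)] .
  then show False using sub assms(1) by (auto simp: maxcons_def consistent_def)
qed

lemma taut_mem: "maxcons X \<Longrightarrow> set Ps \<subseteq> X \<Longrightarrow> taut (Imp (conjs Ps) Q) \<Longrightarrow> Q \<in> X"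
  using derive_mem Taut by blast

lemma thm_mem:
  assumes "maxcons X" "pcl P" shows "P \<in> X"
proof -
  have "taut (Imp P (Imp (conjs []) P))" by (simp add: taut_def)
  then have "pcl (Imp (conjs []) P)" using MP Taut assms(2) by blast
  then show ?thesis using derive_mem[OF assms(1), of "[]"] by simp
qed

lemma mp_mem: "maxcons X \<Longrightarrow> Imp P Q \<in> X \<Longrightarrow> P \<in> X \<Longrightarrow> Q \<in> X"
  by (rule taut_mem[where Ps="[Imp P Q, P]"]) (auto simp: taut_def peval_conjs)

lemma conj_mem: "maxcons X \<Longrightarrow> P \<in> X \<Longrightarrow> Q \<in> X \<Longrightarrow> Conj P Q \<in> X"
  by (rule taut_mem[where Ps="[P, Q]"]) (auto simp: taut_def peval_conjs)

lemma LLE: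
  assumes "maxcons X" "taut (Iff A A')" "Cond A B \<in> X" shows "Cond A' B \<in> X"
proof -
  have "Iff (Cond A B) (Cond A' B) \<in> X" using thm_mem[OF assms(1)] RCEA Taut assms(2) by blast
  then show ?thesis using assms
    by (intro taut_mem[where Ps="[Iff (Cond A B) (Cond A' B), Cond A B]"])
       (auto simp: taut_def peval_conjs Iff_def)
qed

lemma RW:
  assumes "maxcons X" "taut (Imp B B')" "Cond A B \<in> X" shows "Cond A B' \<in> X"
  using mp_mem[OF assms(1) thm_mem[OF assms(1) RCK[OF Taut[OF assms(2)]]] assms(3)] .

lemma AND_mem: "maxcons X \<Longrightarrow> Cond A B \<in> X \<Longrightarrow> Cond A C \<in> X \<Longrightarrow> Cond A (Conj B C) \<in> X"
  using mp_mem thm_mem RAnd conj_mem by metis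

lemma CM_mem: "maxcons X \<Longrightarrow> Cond A B \<in> X \<Longrightarrow> Cond A C \<in> X \<Longrightarrow> Cond (Conj A B) C \<in> X"
  using mp_mem thm_mem CM conj_mem by metis

lemma OR_mem: "maxcons X \<Longrightarrow> Cond A C \<in> X \<Longrightarrow> Cond B C \<in> X \<Longrightarrow> Cond (Disj A B) C \<in> X"
  using mp_mem thm_mem OR conj_mem by metis

lemma ID_mem: "maxcons X \<Longrightarrow> Cond A A \<in> X"
  using thm_mem ID by metis

lemma key:
  assumes X: "maxcons X" and h1: "Cond (Disj C D) C \<in> X" and h2: "Cond (Disj D B) D \<in> X"
  shows "Cond (Disj C B) C \<in> X" "Cond C (Imp B D) \<in> X"
proof -
  define E where "E = Disj C (Disj D B)"
  have s2: "Cond (Disj D B) (Disj C D) \<in> X" by (rule RW[OF X _ h2]) (auto simp: taut_def)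
  have s3: "Cond (Disj (Disj C D) (Disj D B)) (Disj C D) \<in> X"
    by (rule OR_mem[OF X ID_mem[OF X] s2])
  have s4: "Cond E (Disj C D) \<in> X"
    by (rule LLE[OF X _ s3]) (auto simp: taut_def Iff_def E_def)
  have c1: "Cond (Disj C D) (Imp (Disj C D) C) \<in> X" by (rule RW[OF X _ h1]) (auto simp: taut_def)
  have c2: "Cond (Conj E (Disj C D)) (Imp (Disj C D) C) \<in> X"
    by (rule LLE[OF X _ c1]) (auto simp: taut_def Iff_def E_def)
  have c3: "Cond (Conj E (Imp (Disj C D) Bot)) (Imp (Disj C D) C) \<in> X"
    by (rule RW[OF X _ ID_mem[OF X]]) (auto simp: taut_def)
  have c4: "Cond E (Imp (Disj C D) C) \<in> X"
    by (rule LLE[OF X _ OR_mem[OF X c2 c3]]) (auto simp: taut_def Iff_def E_def)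
  have c5: "Cond E C \<in> X"
    by (rule RW[OF X _ AND_mem[OF X s4 c4]]) (auto simp: taut_def)
  have e1: "Cond E (Disj C B) \<in> X" by (rule RW[OF X _ c5]) (auto simp: taut_def)
  show "Cond (Disj C B) C \<in> X"
    by (rule LLE[OF X _ CM_mem[OF X e1 c5]]) (auto simp: taut_def Iff_def E_def)
  have d1: "Cond (Disj D B) (Imp B D) \<in> X" by (rule RW[OF X _ h2]) (auto simp: taut_def)
  have d2: "Cond (Conj C (Conj (Imp B Bot) (Imp D Bot))) (Imp B D) \<in> X"
    by (rule RW[OF X _ ID_mem[OF X]]) (auto simp: taut_def)
  have d3: "Cond E (Imp B D) \<in> X"
    by (rule LLE[OF X _ OR_mem[OF X d1 d2]]) (auto simp: taut_def Iff_def E_def)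
  show "Cond C (Imp B D) \<in> X"
    by (rule LLE[OF X _ CM_mem[OF X c5 d3]]) (auto simp: taut_def Iff_def E_def)
qed

theorem mainTheorem7:
  fixes X Y U :: "'p form set" and A B D :: "'p form"
  assumes "(X, A) \<in> worlds" and "(Y, B) \<in> worlds" and "(U, D) \<in> worlds"
    and "SX X (Y, B) \<in> NX (X, A)"
    and "(U, D) \<in> SX X (Y, B)"
  shows "SX X (U, D) \<subseteq> SX X (Y, B)"
proof (cases "(U, D) = (Y, B)")
  case True then show ?thesis by simp
next
  case False
  have X: "maxcons X" using assms(1) by (simp add: worlds_def)
  from assms(5) False have U: "condset X D \<subseteq> U" "leX X D B" "B \<notin> U"
    by (auto simp: SX_def)
  show ?thesis
  proof
    fix w assume w: "w \<in> SX X (U, D)"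
    obtain Z C where wz: "w = (Z, C)" by (cases w)
    show "w \<in> SX X (Y, B)"
    proof (cases "w = (U, D)")
      case True then show ?thesis using assms(5) by simp
    next
      case False
      with w wz have Zw: "(Z, C) \<in> worlds" "condset X C \<subseteq> Z" "leX X C D" "D \<notin> Z"
        by (auto simp: SX_def)
      have Z: "maxcons Z" using Zw(1) by (simp add: worlds_def)
      have k: "Cond (Disj C B) C \<in> X" "Cond C (Imp B D) \<in> X"
        using key[OF X] Zw(3) U(2) by (auto simp: leX_def)
      have "Imp B D \<in> Z" using k(2) Zw(2) by (auto simp: condset_def)
      then have "B \<notin> Z" using mp_mem[OF Z] Zw(4) by blast
      then show ?thesis using wz Zw k(1) by (auto simp: SX_def leX_def)
    qed
  qed
qed

end
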